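(* Let $n\ge1$, $m\ge0$, and let $\mathfrak{g}\subseteq\mathfrak{gl}(2n+m)$ be the seaweed of type $\frac{2n+m}{n|m|n}$, i.e. the algebra of block lower-triangular matrices with respect to diagonal blocks of sizes $n,m,n$ (so $X_{i,j}=0$ whenever $i\le n<j$, or $i\le n+m<j$). Let $F=\sum_{i,j=1}^n p_{i,j}e_{i,j}^*\in\mathfrak{gl}(n)^*$ and $G=\sum_{i,j=1}^m q_{i,j}e_{i,j}^*\in\mathfrak{gl}(m)^*$ be arbitrary. Define $\Phi,\Phi^a\in\mathfrak{g}^*$ by $$\Phi=\sum_{i,j=1}^np_{i,j}e_{i,j}^*+\sum_{i,j=1}^mq_{i,j}e_{n+i,n+j}^*+\sum_{i,j=1}^np_{i,j}e_{n+m+i,n+m+j}^*+\sum_{i=1}^ne_{n+m+i,i}^*,$$ $$\Phi^a=\sum_{i,j=1}^np_{i,j}e_{i,j}^*+\sum_{i,j=1}^mq_{i,j}e_{n+i,n+j}^*+\sum_{i,j=1}^np_{i,j}e_{2n+m+1-i,2n+m+1-j}^*+\sum_{i=1}^ne_{2n+m+1-i,i}^*.$$ Then $\ker(B_\Phi)=\{X\oplus Y\oplus X: X\in\ker(B_F),\ Y\in\ker(B_G)\}$ and $\ker(B_{\Phi^a})=\{X\oplus Y\oplus X^R: X\in\ker(B_F),\ Y\in\ker(B_G)\}$, where $X^R=A_nXA_n$ with $A_n=\sum_{i=1}^ne_{i,n+1-i}$ (i.e. $(X^R)_{i,j}=X_{n+1-i,n+1-j}$). In particular $$\dim\ker(B_\Phi)=\dim\ker(B_{\Phi^a})=\dim\ker(B_F)+\dim\ker(B_G),$$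 where $\ker(B_F)$ is computed in $\mathfrak{gl}(n)$ and $\ker(B_G)$ in $\mathfrak{gl}(m)$.
   Context: Over $\mathbb{C}$. $e_{i,j}^*(X)=X_{i,j}$. For a Lie algebra $\mathfrak{h}$ and $f\in\mathfrak{h}^*$, $B_f(x,y)=f([x,y])$ and $\ker(B_f)=\{x\in\mathfrak{h}: f([x,y])=0\ \forall y\in\mathfrak{h}\}$. $X\oplus Y\oplus Z$ denotes the block-diagonal matrix with diagonal blocks $X,Y,Z$. When $m=0$ the middle block and $G$ are absent and $\dim\ker(B_G)=0$. *)

theory Defs
  imports Complex_Main "HOL-Library.Function_Algebras"
begin

text \<open>Square complex matrices of size N are represented as functions
  nat \<Rightarrow> nat \<Rightarrow> complex, indexed 1-based by 1..N and vanishing outside.\<close>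

type_synonym cmat = "nat \<Rightarrow> nat \<Rightarrow> complex"

definition gl :: "nat \<Rightarrow> cmat set" where
  "gl N = {X. \<forall>i j. (i \<notin> {1..N} \<or> j \<notin> {1..N}) \<longrightarrow> X i j = 0}"

definition mmul :: "nat \<Rightarrow> cmat \<Rightarrow> cmat \<Rightarrow> cmat" where
  "mmul N X Y = (\<lambda>i j. \<Sum>k=1..N. X i k * Y k j)"

definition br :: "nat \<Rightarrow> cmat \<Rightarrow> cmat \<Rightarrow> cmat" where
  "br N X Y = mmul N X Y - mmul N Y X"

text \<open>The linear functional \<open>\<Sum> c i j e_{i,j}^*\<close> on gl(N), given by its coefficient matrix c.\<close>
definition lf :: "nat \<Rightarrow> cmat \<Rightarrow> cmat \<Rightarrow> complex" where
  "lf N c X = (\<Sum>i=1..N. \<Sum>j=1..N. c i j * X i j)"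

definition kerB :: "nat \<Rightarrow> cmat set \<Rightarrow> cmat \<Rightarrow> cmat set" where
  "kerB N h c = {x \<in> h. \<forall>y\<in>h. lf N c (br N x y) = 0}"

definition seaweed :: "nat \<Rightarrow> nat \<Rightarrow> cmat set" where
  "seaweed n m = {X \<in> gl (2*n+m). \<forall>i j.
     ((i \<le> n \<and> n < j) \<or> (i \<le> n+m \<and> n+m < j)) \<longrightarrow> X i j = 0}"

definition estar :: "nat \<Rightarrow> nat \<Rightarrow> cmat" where
  "estar a b = (\<lambda>i j. if i = a \<and> j = b then 1 else 0)"

definition Phi :: "nat \<Rightarrow> nat \<Rightarrow> cmat \<Rightarrow> cmat \<Rightarrow> cmat" where
  "Phi n m p q =
     (\<Sum>i=1..n. \<Sum>j=1..n. (\<lambda>a b. p i j * estar i j a b))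
   + (\<Sum>i=1..m. \<Sum>j=1..m. (\<lambda>a b. q i j * estar (n+i) (n+j) a b))
   + (\<Sum>i=1..n. \<Sum>j=1..n. (\<lambda>a b. p i j * estar (n+m+i) (n+m+j) a b))
   + (\<Sum>i=1..n. estar (n+m+i) i)"

definition Phi_a :: "nat \<Rightarrow> nat \<Rightarrow> cmat \<Rightarrow> cmat \<Rightarrow> cmat" where
  "Phi_a n m p q =
     (\<Sum>i=1..n. \<Sum>j=1..n. (\<lambda>a b. p i j * estar i j a b))
   + (\<Sum>i=1..m. \<Sum>j=1..m. (\<lambda>a b. q i j * estar (n+i) (n+j) a b))
   + (\<Sum>i=1..n. \<Sum>j=1..n. (\<lambda>a b. p i j * estar (2*n+m+1-i) (2*n+m+1-j) a b))
   + (\<Sum>i=1..n. estar (2*n+m+1-i) i)"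

definition blockdiag :: "nat \<Rightarrow> nat \<Rightarrow> cmat \<Rightarrow> cmat \<Rightarrow> cmat \<Rightarrow> cmat" where
  "blockdiag n m X Y Z = (\<lambda>i j.
     if i \<in> {1..n} \<and> j \<in> {1..n} then X i j
     else if i \<in> {n+1..n+m} \<and> j \<in> {n+1..n+m} then Y (i-n) (j-n)
     else if i \<in> {n+m+1..2*n+m} \<and> j \<in> {n+m+1..2*n+m} then Z (i-n-m) (j-n-m)
     else 0)"

definition revm :: "nat \<Rightarrow> cmat \<Rightarrow> cmat" where
  "revm n X = (\<lambda>i j. if i \<in> {1..n} \<and> j \<in> {1..n} then X (n+1-i) (n+1-j) else 0)"

definition cdim :: "cmat set \<Rightarrow> nat" where
  "cdim S = vector_space.dim (\<lambda>(c::complex) (X::cmat). (\<lambda>i j. c * X i j)) S"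

end

theory Submission
  imports Defs
begin


lemma sum_fun_apply: "(sum f S) x = sum (\<lambda>i. f i x) S"
  by (induction S rule: infinite_finite_induct) auto

definition Qf :: "nat \<Rightarrow> cmat \<Rightarrow> cmat \<Rightarrow> nat \<Rightarrow> nat \<Rightarrow> complex" where
  "Qf N c Z a b = (\<Sum>i=1..N. c i b * Z i a) - (\<Sum>j=1..N. c a j * Z b j)"

lemma lf_br: "lf N c (br N x y) = (\<Sum>a=1..N. \<Sum>b=1..N. y a b * Qf N c x a b)"
proof -
  have T1: "(\<Sum>i=1..N. \<Sum>j=1..N. c i j * (\<Sum>k=1..N. x i k * y k j))
     = (\<Sum>a=1..N. \<Sum>b=1..N. y a b * (\<Sum>i=1..N. c i b * x i a))"
  proof -
    have "(\<Sum>i=1..N. \<Sum>j=1..N. c i j * (\<Sum>k=1..N. x i k * y k j))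
      = (\<Sum>i=1..N. \<Sum>j=1..N. \<Sum>k=1..N. y k j * (c i j * x i k))"
      by (simp add: sum_distrib_left mult_ac)
    also have "\<dots> = (\<Sum>i=1..N. \<Sum>k=1..N. \<Sum>j=1..N. y k j * (c i j * x i k))"
      by (rule sum.cong[OF refl], rule sum.swap)
    also have "\<dots> = (\<Sum>k=1..N. \<Sum>i=1..N. \<Sum>j=1..N. y k j * (c i j * x i k))"
      by (rule sum.swap)
    also have "\<dots> = (\<Sum>k=1..N. \<Sum>j=1..N. \<Sum>i=1..N. y k j * (c i j * x i k))"
      by (rule sum.cong[OF refl], rule sum.swap)
    finally show ?thesis by (simp add: sum_distrib_left)
  qed
  have T2: "(\<Sum>i=1..N. \<Sum>j=1..N. c i j * (\<Sum>k=1..N. y i k * x k j))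
     = (\<Sum>a=1..N. \<Sum>b=1..N. y a b * (\<Sum>j=1..N. c a j * x b j))"
  proof -
    have "(\<Sum>i=1..N. \<Sum>j=1..N. c i j * (\<Sum>k=1..N. y i k * x k j))
      = (\<Sum>i=1..N. \<Sum>j=1..N. \<Sum>k=1..N. y i k * (c i j * x k j))"
      by (simp add: sum_distrib_left mult_ac)
    also have "\<dots> = (\<Sum>i=1..N. \<Sum>k=1..N. \<Sum>j=1..N. y i k * (c i j * x k j))"
      by (rule sum.cong[OF refl], rule sum.swap)
    finally show ?thesis by (simp add: sum_distrib_left)
  qed
  show ?thesis
    unfolding lf_def br_def mmul_def Qf_def
    using T1 T2 by (simp add: right_diff_distrib sum_subtractf)
qed

lemma if_conj0: "(if P \<and> Q then x else 0) = (if P then if Q then x else 0 else 0)" by simp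

lemma sum_if_out: "(\<Sum>x\<in>S. if P then f x else 0) = (if P then (\<Sum>x\<in>S. f x) else 0)"
  by (cases P) auto

lemma kerB_char:
  assumes h: "h = {X \<in> gl N. \<forall>i j. P i j \<longrightarrow> X i j = 0}"
  shows "kerB N h c = {x \<in> h. \<forall>a\<in>{1..N}. \<forall>b\<in>{1..N}. \<not> P a b \<longrightarrow> Qf N c x a b = 0}"
proof (intro set_eqI iffI)
  fix x assume x: "x \<in> kerB N h c"
  hence xh: "x \<in> h" and k: "\<forall>y\<in>h. lf N c (br N x y) = 0" by (auto simp: kerB_def)
  have "Qf N c x a b = 0" if a: "a\<in>{1..N}" and b: "b\<in>{1..N}" and P: "\<not> P a b" for a b
  proof -
    have "estar a b \<in> h" using a b P by (auto simp: h gl_def estar_def)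
    hence "lf N c (br N x (estar a b)) = 0" using k by blast
    hence "(\<Sum>a'=1..N. \<Sum>b'=1..N. estar a b a' b' * Qf N c x a' b') = 0" by (simp add: lf_br)
    moreover have "(\<Sum>a'=1..N. \<Sum>b'=1..N. estar a b a' b' * Qf N c x a' b') = Qf N c x a b"
      using a b by (simp add: estar_def if_distrib[of "\<lambda>t. t * _"] if_conj0 sum_if_out cong: if_cong)
    ultimately show ?thesis by simp
  qed
  thus "x \<in> {x \<in> h. \<forall>a\<in>{1..N}. \<forall>b\<in>{1..N}. \<not> P a b \<longrightarrow> Qf N c x a b = 0}" using xh by blast
next
  fix x assume x: "x \<in> {x \<in> h. \<forall>a\<in>{1..N}. \<forall>b\<in>{1..N}. \<not> P a b \<longrightarrow> Qf N c x a b = 0}"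
  have "lf N c (br N x y) = 0" if y: "y \<in> h" for y
  proof -
    have "y a b * Qf N c x a b = 0" if "a\<in>{1..N}" "b\<in>{1..N}" for a b
      using x y that by (cases "P a b") (auto simp: h)
    thus ?thesis unfolding lf_br by (intro sum.neutral ballI) auto
  qed
  thus "x \<in> kerB N h c" using x by (auto simp: kerB_def)
qed

lemma gl_as: "gl N = {X \<in> gl N. \<forall>i j. False \<longrightarrow> X i j = 0}" by simp
lemma seaweed_as: "seaweed n m = {X \<in> gl (2*n+m). \<forall>i j.
     ((i \<le> n \<and> n < j) \<or> (i \<le> n+m \<and> n+m < j)) \<longrightarrow> X i j = 0}" by (simp add: seaweed_def)

lemma Qf_add: "Qf N (c + d) Z a b = Qf N c Z a b + Qf N d Z a b"
  by (simp add: Qf_def distrib_right sum.distrib)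
lemma Qf_sum: "finite S \<Longrightarrow> Qf N (\<Sum>i\<in>S. f i) Z a b = (\<Sum>i\<in>S. Qf N (f i) Z a b)"
  proof (induction S rule: finite_induct)
  case empty thus ?case by (simp add: Qf_def)
next
  case (insert x F)
  have "Qf N (\<Sum>i\<in>insert x F. f i) Z a b = Qf N (f x + (\<Sum>i\<in>F. f i)) Z a b"
    by (subst sum.insert[OF insert(1) insert(2)]) (rule refl)
  also have "\<dots> = Qf N (f x) Z a b + Qf N (\<Sum>i\<in>F. f i) Z a b" by (rule Qf_add)
  also have "\<dots> = Qf N (f x) Z a b + (\<Sum>i\<in>F. Qf N (f i) Z a b)" using insert.IH by simp
  also have "\<dots> = (\<Sum>i\<in>insert x F. Qf N (f i) Z a b)" using insert(1,2) by simp
  finally show ?case .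
qed
lemma Qf_scale: "Qf N (\<lambda>a b. k * c a b) Z a b = k * Qf N c Z a b"
  by (simp add: Qf_def sum_distrib_left right_diff_distrib mult_ac)
lemma Qf_estar: "\<alpha> \<in> {1..N} \<Longrightarrow> \<beta> \<in> {1..N} \<Longrightarrow>
   Qf N (estar \<alpha> \<beta>) Z a b = (if b = \<beta> then Z \<alpha> a else 0) - (if a = \<alpha> then Z b \<beta> else 0)"
  by (simp add: Qf_def estar_def if_distrib[of "\<lambda>t. t * _"] sum.delta cong: if_cong)

definition PhiG :: "nat \<Rightarrow> nat \<Rightarrow> cmat \<Rightarrow> cmat \<Rightarrow> (nat \<Rightarrow> nat) \<Rightarrow> cmat" where
  "PhiG n m p q \<rho> =
     (\<Sum>i=1..n. \<Sum>j=1..n. (\<lambda>a b. p i j * estar i j a b))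
   + (\<Sum>i=1..m. \<Sum>j=1..m. (\<lambda>a b. q i j * estar (n+i) (n+j) a b))
   + (\<Sum>i=1..n. \<Sum>j=1..n. (\<lambda>a b. p i j * estar (\<rho> i) (\<rho> j) a b))
   + (\<Sum>i=1..n. estar (\<rho> i) i)"

lemma Phi_G: "Phi n m p q = PhiG n m p q (\<lambda>u. n+m+u)"
  by (simp add: Phi_def PhiG_def)
lemma Phi_a_G: "Phi_a n m p q = PhiG n m p q (\<lambda>u. 2*n+m+1-u)"
  by (simp add: Phi_a_def PhiG_def)

lemma neg_if_0: "- (if P then x else 0) = (if P then - x else (0::complex))" by simp
lemma shift_eq1: "(n::nat) < b \<Longrightarrow> (b = n + v) = (v = b - n)" by (cases "b = n+v") auto
lemma d1: "Suc (n::nat) \<le> b \<Longrightarrow> Suc 0 \<le> b - n" by simp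
lemma d2: "(b::nat) \<le> n+m \<Longrightarrow> b - n \<le> m" by linarith
lemma d3: "Suc ((n::nat)+m) \<le> a \<Longrightarrow> (a - n \<le> m) = False" by simp
lemma shift_eq2: "(b::nat) \<le> n \<Longrightarrow> Suc 0 \<le> v \<Longrightarrow> (b = n + v) = False" by auto

lemma mult_if_0: "x * (if P then y else 0) = (if P then x * y else (0::complex))" by simp

locale swset =
  fixes n m :: nat and p q :: cmat and \<rho> \<rho>' :: "nat \<Rightarrow> nat"
  assumes R1: "\<And>u. u \<in> {1..n} \<Longrightarrow> \<rho> u \<in> {n+m+1..2*n+m} \<and> \<rho>' (\<rho> u) = u"
  and R2: "\<And>a. a \<in> {n+m+1..2*n+m} \<Longrightarrow> \<rho>' a \<in> {1..n} \<and> \<rho> (\<rho>' a) = a"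
begin

lemma rho_range: "u \<in> {1..n} \<Longrightarrow> \<rho> u \<in> {1..2*n+m}" using R1[of u] by auto
lemma rho_lo: "u \<in> {1..n} \<Longrightarrow> n+m < \<rho> u" using R1[of u] by auto
lemma rho_hi: "u \<in> {1..n} \<Longrightarrow> \<rho> u \<le> 2*n+m" using R1[of u] by auto

lemma rho_b1: "Suc 0 \<le> u \<Longrightarrow> u \<le> n \<Longrightarrow> Suc 0 \<le> \<rho> u" using R1[of u] by auto
lemma rho_b2: "Suc 0 \<le> u \<Longrightarrow> u \<le> n \<Longrightarrow> \<rho> u \<le> 2*n+m" using R1[of u] by auto

lemma Qf_PhiG: "Qf (2*n+m) (PhiG n m p q \<rho>) Z a b =
   (\<Sum>u=1..n. \<Sum>v=1..n. p u v * ((if b = v then Z u a else 0) - (if a = u then Z b v else 0)))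
 + (\<Sum>u=1..m. \<Sum>v=1..m. q u v * ((if b = n+v then Z (n+u) a else 0) - (if a = n+u then Z b (n+v) else 0)))
 + (\<Sum>u=1..n. \<Sum>v=1..n. p u v * ((if b = \<rho> v then Z (\<rho> u) a else 0) - (if a = \<rho> u then Z b (\<rho> v) else 0)))
 + (\<Sum>u=1..n. (if b = u then Z (\<rho> u) a else 0) - (if a = \<rho> u then Z b u else 0))"
  unfolding PhiG_def
  by (simp add: Qf_add Qf_sum Qf_scale Qf_estar rho_b1 rho_b2)

lemma rho_b3: "Suc 0 \<le> u \<Longrightarrow> u \<le> n \<Longrightarrow> n+m < \<rho> u" using R1[of u] by auto
lemma rho_eq: "a \<in> {n+m+1..2*n+m} \<Longrightarrow> Suc 0 \<le> u \<Longrightarrow> u \<le> n \<Longrightarrow> (a = \<rho> u) = (u = \<rho>' a)"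
  using R1[of u] R2[of a] by auto
lemma rho_ne: "a \<le> n+m \<Longrightarrow> Suc 0 \<le> u \<Longrightarrow> u \<le> n \<Longrightarrow> (a = \<rho> u) = False"
  using R1[of u] by auto

lemma rhoi_b1: "Suc (n+m) \<le> a \<Longrightarrow> a \<le> 2*n+m \<Longrightarrow> Suc 0 \<le> \<rho>' a" using R2[of a] by auto
lemma rhoi_b2: "Suc (n+m) \<le> a \<Longrightarrow> a \<le> 2*n+m \<Longrightarrow> \<rho>' a \<le> n" using R2[of a] by auto

context
  fixes Z :: cmat
  assumes z1a: "\<forall>i j. i \<le> n \<longrightarrow> n < j \<longrightarrow> Z i j = 0"
  and z2a: "\<forall>i j. i \<le> n+m \<longrightarrow> n+m < j \<longrightarrow> Z i j = 0"
begin

lemma z1: "i \<le> n \<Longrightarrow> n < j \<Longrightarrow> Z i j = 0" using z1a by blast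
lemma z2: "i \<le> n+m \<Longrightarrow> n+m < j \<Longrightarrow> Z i j = 0" using z2a by blast

lemmas QS = Qf_PhiG right_diff_distrib sum_subtractf mult_if_0 rho_b3 z1 z2 sum_if_out neg_if_0 rhoi_b1 rhoi_b2 d1 d2 d3

lemma C11: "a \<in> {1..n} \<Longrightarrow> b \<in> {1..n} \<Longrightarrow> Qf (2*n+m) (PhiG n m p q \<rho>) Z a b =
   (\<Sum>u=1..n. p u b * Z u a) - (\<Sum>v=1..n. p a v * Z b v) + Z (\<rho> b) a"
  by (simp add: QS rho_ne[of a] shift_eq1[of n a] shift_eq2[of a n] rho_ne[of b] shift_eq1[of n b] shift_eq2[of b n] shift_eq1[of n b] shift_eq2[of b n])

lemma C21: "a \<in> {n+1..n+m} \<Longrightarrow> b \<in> {1..n} \<Longrightarrow> Qf (2*n+m) (PhiG n m p q \<rho>) Z a b = Z (\<rho> b) a"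
  by (simp add: QS rho_ne[of a] shift_eq1[of n a] shift_eq2[of a n] rho_ne[of b] shift_eq1[of n b] shift_eq2[of b n] shift_eq1[of n b] shift_eq2[of b n])

lemma C22: "a \<in> {n+1..n+m} \<Longrightarrow> b \<in> {n+1..n+m} \<Longrightarrow> Qf (2*n+m) (PhiG n m p q \<rho>) Z a b =
   (\<Sum>u=1..m. q u (b-n) * Z (n+u) a) - (\<Sum>v=1..m. q (a-n) v * Z b (n+v))"
  by (simp add: QS rho_ne[of a] shift_eq1[of n a] shift_eq2[of a n] rho_ne[of b] shift_eq1[of n b] shift_eq2[of b n] shift_eq1[of n b] shift_eq2[of b n])

lemma C31: "a \<in> {n+m+1..2*n+m} \<Longrightarrow> b \<in> {1..n} \<Longrightarrow> Qf (2*n+m) (PhiG n m p q \<rho>) Z a b =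
   Z (\<rho> b) a - Z b (\<rho>' a)"
  by (simp add: QS rho_eq[of a] shift_eq1[of n a] shift_eq2[of a n] rho_ne[of b] shift_eq1[of n b] shift_eq2[of b n] shift_eq1[of n b] shift_eq2[of b n])

lemma C32: "a \<in> {n+m+1..2*n+m} \<Longrightarrow> b \<in> {n+1..n+m} \<Longrightarrow> Qf (2*n+m) (PhiG n m p q \<rho>) Z a b =
   - Z b (\<rho>' a)"
  by (simp add: QS rho_eq[of a] shift_eq1[of n a] shift_eq2[of a n] rho_ne[of b] shift_eq1[of n b] shift_eq2[of b n] shift_eq1[of n b] shift_eq2[of b n])

lemma C33: "a \<in> {n+m+1..2*n+m} \<Longrightarrow> b \<in> {n+m+1..2*n+m} \<Longrightarrow> Qf (2*n+m) (PhiG n m p q \<rho>) Z a b =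
   (\<Sum>u=1..n. p u (\<rho>' b) * Z (\<rho> u) a) - (\<Sum>v=1..n. p (\<rho>' a) v * Z b (\<rho> v)) - Z b (\<rho>' a)"
  by (simp add: QS rho_eq[of a] shift_eq1[of n a] shift_eq2[of a n] rho_eq[of b] shift_eq1[of n b] shift_eq2[of b n] shift_eq1[of n b] shift_eq2[of b n])

end

definition Tr :: "cmat \<Rightarrow> cmat" where
  "Tr X = (\<lambda>i j. if i \<in> {1..n} \<and> j \<in> {1..n} then X (\<rho>' (n+m+i)) (\<rho>' (n+m+j)) else 0)"

lemma QF_X_eq: "X \<in> kerB n (gl n) p \<longleftrightarrow> X \<in> gl n \<and> (\<forall>a\<in>{1..n}. \<forall>b\<in>{1..n}. Qf n p X a b = 0)"
  by (subst kerB_char[OF gl_as]) auto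

lemma QF_Y_eq: "Y \<in> kerB m (gl m) q \<longleftrightarrow> Y \<in> gl m \<and> (\<forall>a\<in>{1..m}. \<forall>b\<in>{1..m}. Qf m q Y a b = 0)"
  by (subst kerB_char[OF gl_as]) auto

lemma ker_sub:
  assumes Z: "Z \<in> kerB (2*n+m) (seaweed n m) (PhiG n m p q \<rho>)"
  shows "\<exists>X Y. Z = blockdiag n m X Y (Tr X) \<and> X \<in> kerB n (gl n) p \<and> Y \<in> kerB m (gl m) q"
proof -
  have Zs: "Z \<in> seaweed n m" and
    Q: "\<And>a b. a\<in>{1..2*n+m} \<Longrightarrow> b\<in>{1..2*n+m} \<Longrightarrow> \<not> ((a \<le> n \<and> n < b) \<or> (a \<le> n+m \<and> n+m < b))
          \<Longrightarrow> Qf (2*n+m) (PhiG n m p q \<rho>) Z a b = 0"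
    using Z by (subst (asm) kerB_char[OF seaweed_as]; auto)+
  have zg: "\<And>i j. i \<notin> {1..2*n+m} \<or> j \<notin> {1..2*n+m} \<Longrightarrow> Z i j = 0"
    using Zs by (auto simp: seaweed_def gl_def)
  have z1: "\<And>i j. i \<le> n \<Longrightarrow> n < j \<Longrightarrow> Z i j = 0" using Zs by (auto simp: seaweed_def)
  have z2: "\<And>i j. i \<le> n+m \<Longrightarrow> n+m < j \<Longrightarrow> Z i j = 0" using Zs by (auto simp: seaweed_def)
  have z1a: "\<forall>i j. i \<le> n \<longrightarrow> n < j \<longrightarrow> Z i j = 0" using z1 by blast
  have z2a: "\<forall>i j. i \<le> n+m \<longrightarrow> n+m < j \<longrightarrow> Z i j = 0" using z2 by blast
  note CC = C11[where Z=Z, OF z1a z2a] C21[where Z=Z, OF z1a z2a] C22[where Z=Z, OF z1a z2a] C31[where Z=Z, OF z1a z2a] C32[where Z=Z, OF z1a z2a] C33[where Z=Z, OF z1a z2a]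
  have F21: "Z (\<rho> b) a = 0" if "a \<in> {n+1..n+m}" "b \<in> {1..n}" for a b
    using Q[of a b] CC(2)[of a b] that by auto
  have F32: "Z b (\<rho>' a) = 0" if "a \<in> {n+m+1..2*n+m}" "b \<in> {n+1..n+m}" for a b
    using Q[of a b] CC(5)[of a b] that by auto
  have F31: "Z (\<rho> b) a = Z b (\<rho>' a)" if "a \<in> {n+m+1..2*n+m}" "b \<in> {1..n}" for a b
    using Q[of a b] CC(4)[of a b] that by auto
  have F11: "(\<Sum>u=1..n. p u b * Z u a) - (\<Sum>v=1..n. p a v * Z b v) = 0 \<and> Z (\<rho> b) a = 0"
    if a: "a \<in> {1..n}" and b: "b \<in> {1..n}" for a b
  proof -
    have e1: "(\<Sum>u=1..n. p u b * Z u a) - (\<Sum>v=1..n. p a v * Z b v) + Z (\<rho> b) a = 0"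
      using Q[of a b] CC(1)[of a b] a b by auto
    have ra: "\<rho> a \<in> {n+m+1..2*n+m}" and rb: "\<rho> b \<in> {n+m+1..2*n+m}" using R1 a b by auto
    have "Qf (2*n+m) (PhiG n m p q \<rho>) Z (\<rho> a) (\<rho> b) = 0" using Q[of "\<rho> a" "\<rho> b"] ra rb by auto
    hence e2: "(\<Sum>u=1..n. p u b * Z (\<rho> u) (\<rho> a)) - (\<Sum>v=1..n. p a v * Z (\<rho> b) (\<rho> v)) - Z (\<rho> b) a = 0"
      using CC(6)[of "\<rho> a" "\<rho> b"] ra rb R1 a b by auto
    have s1: "(\<Sum>u=1..n. p u b * Z (\<rho> u) (\<rho> a)) = (\<Sum>u=1..n. p u b * Z u a)"
      by (rule sum.cong[OF refl]) (use F31 ra R1 a in auto)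
    have s2: "(\<Sum>v=1..n. p a v * Z (\<rho> b) (\<rho> v)) = (\<Sum>v=1..n. p a v * Z b v)"
      by (rule sum.cong[OF refl]) (use F31 R1 b in auto)
    define x where "x = (\<Sum>u=1..n. p u b * Z u a) - (\<Sum>v=1..n. p a v * Z b v)"
    define y where "y = Z (\<rho> b) a"
    have h1: "x + y = 0" using e1 by (simp add: x_def y_def)
    have h2: "x - y = 0" using e2 s1 s2 by (simp add: x_def y_def)
    have "x = y" using h2 by simp
    hence "2 * y = 0" using h1 by simp
    hence "y = 0" by simp
    moreover have "x = 0" using h1 \<open>y = 0\<close> by simp
    ultimately show ?thesis by (simp add: x_def y_def)
  qed
  define X where "X = (\<lambda>i j. if i \<in> {1..n} \<and> j \<in> {1..n} then Z i j else 0)"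
  define Y where "Y = (\<lambda>i j. if i \<in> {1..m} \<and> j \<in> {1..m} then Z (n+i) (n+j) else 0)"
  have Xk: "X \<in> kerB n (gl n) p"
    unfolding QF_X_eq
  proof
    show "X \<in> gl n" by (auto simp: X_def gl_def)
    show "\<forall>a\<in>{1..n}. \<forall>b\<in>{1..n}. Qf n p X a b = 0"
    proof (intro ballI)
      fix a b assume a: "a \<in> {1..n}" and b: "b \<in> {1..n}"
      have "Qf n p X a b = (\<Sum>u=1..n. p u b * Z u a) - (\<Sum>v=1..n. p a v * Z b v)"
        unfolding Qf_def using a b by (auto simp: X_def intro!: arg_cong2[where f="(-)"] sum.cong)
      thus "Qf n p X a b = 0" using F11[OF a b] by simp
    qed
  qed
  have Yk: "Y \<in> kerB m (gl m) q"
    unfolding QF_Y_eq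
  proof
    show "Y \<in> gl m" by (auto simp: Y_def gl_def)
    show "\<forall>a\<in>{1..m}. \<forall>b\<in>{1..m}. Qf m q Y a b = 0"
    proof (intro ballI)
      fix a b assume a: "a \<in> {1..m}" and b: "b \<in> {1..m}"
      have "Qf m q Y a b = (\<Sum>u=1..m. q u b * Z (n+u) (n+a)) - (\<Sum>v=1..m. q a v * Z (n+b) (n+v))"
        unfolding Qf_def using a b by (auto simp: Y_def intro!: arg_cong2[where f="(-)"] sum.cong)
      also have "\<dots> = Qf (2*n+m) (PhiG n m p q \<rho>) Z (n+a) (n+b)"
        using CC(3)[of "n+a" "n+b"] a b by auto
      also have "\<dots> = 0" using Q[of "n+a" "n+b"] a b by auto
      finally show "Qf m q Y a b = 0" .
    qed
  qed
  have "Z = blockdiag n m X Y (Tr X)"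
  proof (intro ext)
    fix i j
    show "Z i j = blockdiag n m X Y (Tr X) i j"
    proof (cases "i \<in> {1..2*n+m} \<and> j \<in> {1..2*n+m}")
      case False thus ?thesis using zg[of i j] by (auto simp: blockdiag_def X_def Tr_def)
    next
      case True
      hence bi: "i \<in> {1..n} \<or> i \<in> {n+1..n+m} \<or> i \<in> {n+m+1..2*n+m}"
        and bj: "j \<in> {1..n} \<or> j \<in> {n+1..n+m} \<or> j \<in> {n+m+1..2*n+m}" by auto
      show ?thesis
      proof -
        { assume "i \<in> {1..n}" "j \<in> {1..n}" hence ?thesis by (simp add: blockdiag_def X_def) }
        moreover { assume "i \<in> {1..n}" "j \<notin> {1..n}" hence ?thesis using z1[of i j] True by (auto simp: blockdiag_def X_def) }
        moreover { assume "i \<in> {n+1..n+m}" "j \<in> {n+1..n+m}" hence ?thesis by (auto simp: blockdiag_def Y_def) }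
        moreover { assume "i \<in> {n+1..n+m}" "j \<in> {n+m+1..2*n+m}" hence ?thesis using z2[of i j] by (auto simp: blockdiag_def) }
        moreover { assume i: "i \<in> {n+1..n+m}" and j: "j \<in> {1..n}"
          hence ?thesis using F32[of "\<rho> j" i] R1[of j] by (auto simp: blockdiag_def) }
        moreover { assume i: "i \<in> {n+m+1..2*n+m}" and j: "j \<in> {n+1..n+m}"
          hence ?thesis using F21[of j "\<rho>' i"] R2[of i] by (auto simp: blockdiag_def) }
        moreover { assume i: "i \<in> {n+m+1..2*n+m}" and j: "j \<in> {1..n}"
          hence ?thesis using F11[of j "\<rho>' i"] R2[of i] by (auto simp: blockdiag_def) }
        moreover { assume i: "i \<in> {n+m+1..2*n+m}" and j: "j \<in> {n+m+1..2*n+m}"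
          have "Z i j = Z (\<rho>' i) (\<rho>' j)" using F31[of j "\<rho>' i"] R2[of i] R2[of j] i j by auto
          hence ?thesis using i j R2[of i] R2[of j] by (auto simp: blockdiag_def Tr_def X_def) }
        ultimately show ?thesis using bi bj by blast
      qed
    qed
  qed
  thus ?thesis using Xk Yk by blast
qed

lemma ker_sup:
  assumes Xk: "X \<in> kerB n (gl n) p" and Yk: "Y \<in> kerB m (gl m) q"
  shows "blockdiag n m X Y (Tr X) \<in> kerB (2*n+m) (seaweed n m) (PhiG n m p q \<rho>)"
proof -
  define Z where "Z = blockdiag n m X Y (Tr X)"
  have QX: "\<And>a b. a\<in>{1..n} \<Longrightarrow> b\<in>{1..n} \<Longrightarrow> Qf n p X a b = 0" using Xk unfolding QF_X_eq by auto
  have QY: "\<And>a b. a\<in>{1..m} \<Longrightarrow> b\<in>{1..m} \<Longrightarrow> Qf m q Y a b = 0" using Yk unfolding QF_Y_eq by auto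
  have Zs: "Z \<in> seaweed n m" by (auto simp: Z_def seaweed_def gl_def blockdiag_def)
  have z1: "\<And>i j. i \<le> n \<Longrightarrow> n < j \<Longrightarrow> Z i j = 0" using Zs by (auto simp: seaweed_def)
  have z2: "\<And>i j. i \<le> n+m \<Longrightarrow> n+m < j \<Longrightarrow> Z i j = 0" using Zs by (auto simp: seaweed_def)
  have z1a: "\<forall>i j. i \<le> n \<longrightarrow> n < j \<longrightarrow> Z i j = 0" using z1 by blast
  have z2a: "\<forall>i j. i \<le> n+m \<longrightarrow> n+m < j \<longrightarrow> Z i j = 0" using z2 by blast
  note CC = C11[where Z=Z, OF z1a z2a] C21[where Z=Z, OF z1a z2a] C22[where Z=Z, OF z1a z2a]
     C31[where Z=Z, OF z1a z2a] C32[where Z=Z, OF z1a z2a] C33[where Z=Z, OF z1a z2a]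
  have E1: "\<And>i j. i \<in> {1..n} \<Longrightarrow> j \<in> {1..n} \<Longrightarrow> Z i j = X i j" by (simp add: Z_def blockdiag_def)
  have E2: "\<And>i j. i \<in> {n+1..n+m} \<Longrightarrow> j \<in> {n+1..n+m} \<Longrightarrow> Z i j = Y (i-n) (j-n)" by (auto simp: Z_def blockdiag_def)
  have E3: "\<And>i j. i \<in> {n+m+1..2*n+m} \<Longrightarrow> j \<in> {n+m+1..2*n+m} \<Longrightarrow> Z i j = X (\<rho>' i) (\<rho>' j)"
    by (auto simp: Z_def blockdiag_def Tr_def)
  have E31: "\<And>i j. i \<in> {n+m+1..2*n+m} \<Longrightarrow> j \<in> {1..n} \<Longrightarrow> Z i j = 0" by (auto simp: Z_def blockdiag_def)
  have E32: "\<And>i j. i \<in> {n+m+1..2*n+m} \<Longrightarrow> j \<in> {n+1..n+m} \<Longrightarrow> Z i j = 0" by (auto simp: Z_def blockdiag_def)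
  have E21: "\<And>i j. i \<in> {n+1..n+m} \<Longrightarrow> j \<in> {1..n} \<Longrightarrow> Z i j = 0" by (auto simp: Z_def blockdiag_def)
  have "Qf (2*n+m) (PhiG n m p q \<rho>) Z a b = 0"
    if a: "a\<in>{1..2*n+m}" and b: "b\<in>{1..2*n+m}" and P: "\<not> ((a \<le> n \<and> n < b) \<or> (a \<le> n+m \<and> n+m < b))" for a b
  proof -
    have ba: "a \<in> {1..n} \<or> a \<in> {n+1..n+m} \<or> a \<in> {n+m+1..2*n+m}" using a by auto
    have bb: "b \<in> {1..n} \<or> b \<in> {n+1..n+m} \<or> b \<in> {n+m+1..2*n+m}" using b by auto
    { assume a1: "a \<in> {1..n}" and b1: "b \<in> {1..n}"
      have "(\<Sum>u=1..n. p u b * Z u a) - (\<Sum>v=1..n. p a v * Z b v) = Qf n p X a b"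
        unfolding Qf_def using a1 b1 E1 by (auto intro!: arg_cong2[where f="(-)"] sum.cong)
      moreover have "Z (\<rho> b) a = 0" using E31 R1[of b] a1 b1 by auto
      ultimately have ?thesis using CC(1)[OF a1 b1] QX[OF a1 b1] by simp }
    moreover
    { assume a2: "a \<in> {n+1..n+m}" and b1: "b \<in> {1..n}"
      have ?thesis using CC(2)[OF a2 b1] E32 R1[of b] a2 b1 by auto }
    moreover
    { assume a2: "a \<in> {n+1..n+m}" and b2: "b \<in> {n+1..n+m}"
      have "(\<Sum>u=1..m. q u (b-n) * Z (n+u) a) - (\<Sum>v=1..m. q (a-n) v * Z b (n+v)) = Qf m q Y (a-n) (b-n)"
        unfolding Qf_def using a2 b2 E2 by (auto intro!: arg_cong2[where f="(-)"] sum.cong)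
      moreover have "Qf m q Y (a-n) (b-n) = 0" using QY[of "a-n" "b-n"] a2 b2 d1[of n a] d2[of a n m] d1[of n b] d2[of b n m] by auto
      ultimately have ?thesis using CC(3)[OF a2 b2] by simp }
    moreover
    { assume a3: "a \<in> {n+m+1..2*n+m}" and b1: "b \<in> {1..n}"
      have "Z (\<rho> b) a = Z b (\<rho>' a)" using E3[of "\<rho> b" a] E1[of b "\<rho>' a"] R1[of b] R2[of a] a3 b1 by auto
      hence ?thesis using CC(4)[OF a3 b1] by simp }
    moreover
    { assume a3: "a \<in> {n+m+1..2*n+m}" and b2: "b \<in> {n+1..n+m}"
      have ?thesis using CC(5)[OF a3 b2] E21 R2[of a] a3 b2 by auto }
    moreover
    { assume a3: "a \<in> {n+m+1..2*n+m}" and b3: "b \<in> {n+m+1..2*n+m}"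
      have "(\<Sum>u=1..n. p u (\<rho>' b) * Z (\<rho> u) a) - (\<Sum>v=1..n. p (\<rho>' a) v * Z b (\<rho> v))
          = Qf n p X (\<rho>' a) (\<rho>' b)"
        unfolding Qf_def using a3 b3 E3 R1 R2 by (auto intro!: arg_cong2[where f="(-)"] sum.cong)
      moreover have "Qf n p X (\<rho>' a) (\<rho>' b) = 0" using QX R2 a3 b3 by auto
      moreover have "Z b (\<rho>' a) = 0" using E31 R2 a3 b3 by auto
      ultimately have ?thesis using CC(6)[OF a3 b3] by simp }
    ultimately show ?thesis using ba bb P by auto
  qed
  hence "Z \<in> kerB (2*n+m) (seaweed n m) (PhiG n m p q \<rho>)"
    using Zs by (subst kerB_char[OF seaweed_as]) auto
  thus ?thesis by (simp add: Z_def)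
qed

lemma ker_eq: "kerB (2*n+m) (seaweed n m) (PhiG n m p q \<rho>) =
   {blockdiag n m X Y (Tr X) | X Y. X \<in> kerB n (gl n) p \<and> Y \<in> kerB m (gl m) q}"
  using ker_sub ker_sup by blast

end



context vector_space begin

lemma indep_union:
  assumes A: "independent A" and B: "independent B"
  and D: "\<And>x y. x \<in> span A \<Longrightarrow> y \<in> span B \<Longrightarrow> x + y = 0 \<Longrightarrow> x = 0"
  shows "independent (A \<union> B)"
  unfolding independent_explicit_module
proof (intro allI impI)
  fix t u v
  assume t: "finite t" and tAB: "t \<subseteq> A \<union> B" and s0: "(\<Sum>v\<in>t. u v *s v) = 0" and v: "v \<in> t"
  define tA where "tA = t \<inter> A"
  define tB where "tB = t - A"
  have ftA: "finite tA" and ftB: "finite tB" using t by (auto simp: tA_def tB_def)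
  have tAs: "tA \<subseteq> A" and tBs: "tB \<subseteq> B" using tAB by (auto simp: tA_def tB_def)
  have split: "(\<Sum>v\<in>t. u v *s v) = (\<Sum>v\<in>tA. u v *s v) + (\<Sum>v\<in>tB. u v *s v)"
    unfolding tA_def tB_def by (rule sum.Int_Diff[OF t])
  have xs: "(\<Sum>v\<in>tA. u v *s v) \<in> span A"
    by (intro span_sum span_scale) (use tAs in \<open>auto intro: span_base\<close>)
  have ys: "(\<Sum>v\<in>tB. u v *s v) \<in> span B"
    by (intro span_sum span_scale) (use tBs in \<open>auto intro: span_base\<close>)
  have x0: "(\<Sum>v\<in>tA. u v *s v) = 0" using D[OF xs ys] s0 split by simp
  hence y0: "(\<Sum>v\<in>tB. u v *s v) = 0" using s0 split by simp
  show "u v = 0"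
  proof (cases "v \<in> A")
    case True thus ?thesis using independentD[OF A ftA tAs x0] v by (auto simp: tA_def)
  next
    case False thus ?thesis using independentD[OF B ftB tBs y0] v by (auto simp: tB_def)
  qed
qed

lemma dim_direct:
  assumes lin1: "Vector_Spaces.linear scale scale L1" and lin2: "Vector_Spaces.linear scale scale L2"
  and S1: "subspace S1" and S2: "subspace S2"
  and inj1: "inj_on L1 S1" and inj2: "inj_on L2 S2"
  and F1: "finite F1" "S1 \<subseteq> span F1" and F2: "finite F2" "S2 \<subseteq> span F2"
  and KF: "subspace KF" "KF \<subseteq> S1" and KG: "subspace KG" "KG \<subseteq> S2"
  and disj: "\<And>x y. x \<in> S1 \<Longrightarrow> y \<in> S2 \<Longrightarrow> L1 x + L2 y = 0 \<Longrightarrow> L1 x = 0"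
  shows "dim {L1 x + L2 y | x y. x \<in> KF \<and> y \<in> KG} = dim KF + dim KG"
proof -
  interpret l1: Vector_Spaces.linear scale scale L1 by fact
  interpret l2: Vector_Spaces.linear scale scale L2 by fact
  obtain BF where BF: "BF \<subseteq> KF" "independent BF" "KF \<subseteq> span BF" "card BF = dim KF"
    by (rule basis_exists)
  obtain BG where BG: "BG \<subseteq> KG" "independent BG" "KG \<subseteq> span BG" "card BG = dim KG"
    by (rule basis_exists)
  have fBF: "finite BF" using independent_span_bound[OF F1(1) BF(2)] BF(1) KF(2) F1(2) by blast
  have fBG: "finite BG" using independent_span_bound[OF F2(1) BG(2)] BG(1) KG(2) F2(2) by blast
  have spF: "span BF \<subseteq> S1" using span_minimal[of BF S1] S1 BF(1) KF(2) by blast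
  have spG: "span BG \<subseteq> S2" using span_minimal[of BG S2] S2 BG(1) KG(2) by blast
  define B1 where "B1 = L1 ` BF"
  define B2 where "B2 = L2 ` BG"
  have i1: "independent B1" unfolding B1_def
    by (rule l1.independent_injective_image[OF BF(2)]) (rule inj_on_subset[OF inj1 spF])
  have i2: "independent B2" unfolding B2_def
    by (rule l2.independent_injective_image[OF BG(2)]) (rule inj_on_subset[OF inj2 spG])
  have c1: "card B1 = card BF" unfolding B1_def
    by (rule card_image, rule inj_on_subset[OF inj1]) (use spF span_superset in blast)
  have c2: "card B2 = card BG" unfolding B2_def
    by (rule card_image, rule inj_on_subset[OF inj2]) (use spG span_superset in blast)
  have sp1: "span B1 = L1 ` span BF" unfolding B1_def by (rule l1.span_image)
  have sp2: "span B2 = L2 ` span BG" unfolding B2_def by (rule l2.span_image)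
  have D: "x = 0" if xy: "x \<in> span B1" "y \<in> span B2" "x + y = 0" for x y
  proof -
    obtain u where u: "u \<in> span BF" "x = L1 u" using xy(1) unfolding sp1 by blast
    obtain v where v: "v \<in> span BG" "y = L2 v" using xy(2) unfolding sp2 by blast
    show ?thesis using disj[of u v] u v spF spG xy(3) by blast
  qed
  have i12: "independent (B1 \<union> B2)" by (rule indep_union[OF i1 i2 D])
  have dj: "B1 \<inter> B2 = {}"
  proof (rule ccontr)
    assume "B1 \<inter> B2 \<noteq> {}"
    then obtain z where z: "z \<in> B1" "z \<in> B2" by blast
    have "z \<in> span B1" using z span_base by blast
    moreover have "- z \<in> span B2" using z span_base span_neg by blast
    ultimately have "z = 0" using D[of z "-z"] by simp
    thus False using z(1) i1 dependent_zero by blast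
  qed
  have card12: "card (B1 \<union> B2) = dim KF + dim KG"
    using card_Un_disjoint[of B1 B2] fBF fBG dj c1 c2 BF(4) BG(4) by (simp add: B1_def B2_def)
  let ?K = "{L1 x + L2 y | x y. x \<in> KF \<and> y \<in> KG}"
  have sub: "B1 \<union> B2 \<subseteq> ?K"
  proof
    fix z assume zz: "z \<in> B1 \<union> B2"
    have "0 \<in> KF" "0 \<in> KG" using KF(1) KG(1) subspace_0 by blast+
    from zz show "z \<in> ?K"
    proof (rule UnE)
      assume "z \<in> B1"
      then obtain x where x: "x \<in> BF" "z = L1 x" unfolding B1_def by blast
      hence "z = L1 x + L2 0" by (simp add: l2.zero)
      thus ?thesis using x BF(1) \<open>0 \<in> KG\<close> by blast
    next
      assume "z \<in> B2"
      then obtain y where y: "y \<in> BG" "z = L2 y" unfolding B2_def by blast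
      hence "z = L1 0 + L2 y" by (simp add: l1.zero)
      thus ?thesis using y BG(1) \<open>0 \<in> KF\<close> by blast
    qed
  qed
  have spn: "?K \<subseteq> span (B1 \<union> B2)"
  proof
    fix z assume "z \<in> ?K"
    then obtain x y where z: "z = L1 x + L2 y" "x \<in> KF" "y \<in> KG" by blast
    have a1: "L1 x \<in> span B1" using z(2) BF(3) sp1 by blast
    have a2: "L2 y \<in> span B2" using z(3) BG(3) sp2 by blast
    have "L1 x \<in> span (B1 \<union> B2)" using a1 span_mono[of B1 "B1 \<union> B2"] by blast
    moreover have "L2 y \<in> span (B1 \<union> B2)" using a2 span_mono[of B2 "B1 \<union> B2"] by blast
    ultimately have "L1 x \<in> span (B1 \<union> B2) \<and> L2 y \<in> span (B1 \<union> B2)" by blast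
    thus "z \<in> span (B1 \<union> B2)" using z(1) span_add by auto
  qed
  show ?thesis using basis_card_eq_dim[OF sub spn i12] card12 by simp
qed

end



interpretation V: vector_space "\<lambda>(c::complex) (X::cmat) i j. c * X i j"
  by unfold_locales (auto simp: fun_eq_iff algebra_simps)

lemma cdim_eq: "cdim S = V.dim S" by (simp add: cdim_def)

lemma Qf_addZ: "Qf N c (x + x') a b = Qf N c x a b + Qf N c x' a b"
  by (simp add: Qf_def distrib_left sum.distrib)
lemma Qf_scaleZ: "Qf N c (\<lambda>i j. k * x i j) a b = k * Qf N c x a b"
  by (simp add: Qf_def sum_distrib_left right_diff_distrib mult_ac)
lemma Qf_zeroZ: "Qf N c 0 a b = 0"
  by (simp add: Qf_def)

lemma gl_subspace: "V.subspace (gl N)"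
  by (auto simp: V.subspace_def gl_def)

lemma kerB_gl_subspace: "V.subspace (kerB N (gl N) c)"
  unfolding V.subspace_def
proof (intro conjI ballI allI)
  show "0 \<in> kerB N (gl N) c" by (simp add: kerB_def gl_def lf_br Qf_zeroZ)
next
  fix x y assume x: "x \<in> kerB N (gl N) c" and y: "y \<in> kerB N (gl N) c"
  show "x + y \<in> kerB N (gl N) c"
    using x y by (auto simp: kerB_def gl_def lf_br Qf_addZ distrib_left sum.distrib)
next
  fix k x assume x: "x \<in> kerB N (gl N) c"
  show "(\<lambda>i j. k * x i j) \<in> kerB N (gl N) c"
  proof -
    have "\<forall>y\<in>gl N. lf N c (br N (\<lambda>i j. k * x i j) y) = k * lf N c (br N x y)"
      by (simp add: lf_br Qf_scaleZ sum_distrib_left mult_ac)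
    thus ?thesis using x by (auto simp: kerB_def gl_def)
  qed
qed

lemma kerB_sub_gl: "kerB N (gl N) c \<subseteq> gl N" by (auto simp: kerB_def)

lemma gl_span: "gl N \<subseteq> V.span ((\<lambda>ij. estar (fst ij) (snd ij)) ` ({1..N} \<times> {1..N}))"
proof
  fix X assume X: "X \<in> gl N"
  let ?E = "(\<lambda>ij. estar (fst ij) (snd ij)) ` ({1..N} \<times> {1..N})"
  have eq: "X = (\<Sum>ij\<in>{1..N} \<times> {1..N}. (\<lambda>i j. X (fst ij) (snd ij) * estar (fst ij) (snd ij) i j))"
  proof (intro ext)
    fix a b
    have "(\<Sum>ij\<in>{1..N} \<times> {1..N}. (\<lambda>i j. X (fst ij) (snd ij) * estar (fst ij) (snd ij) i j)) a b
       = (\<Sum>ij\<in>{1..N} \<times> {1..N}. if ij = (a,b) then X a b else 0)"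
      unfolding sum_fun_apply estar_def by (rule sum.cong) auto
    also have "\<dots> = (if (a,b) \<in> {1..N} \<times> {1..N} then X a b else 0)"
      by (simp only: sum.delta finite_SigmaI finite_atLeastAtMost)
    also have "\<dots> = X a b" using X by (auto simp: gl_def)
    finally show "X a b = (\<Sum>ij\<in>{1..N} \<times> {1..N}. (\<lambda>i j. X (fst ij) (snd ij) * estar (fst ij) (snd ij) i j)) a b" by simp
  qed
  have "(\<Sum>ij\<in>{1..N} \<times> {1..N}. (\<lambda>i j. X (fst ij) (snd ij) * estar (fst ij) (snd ij) i j)) \<in> V.span ?E"
    by (intro V.span_sum V.span_scale[where c="X (fst _) (snd _)" and x="estar (fst _) (snd _)", simplified])
       (auto intro: V.span_base)
  thus "X \<in> V.span ?E" using eq by simp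
qed

lemma dim_final:
  assumes Tadd: "\<And>X X'. T (X + X') = T X + T X'"
  and Tsc: "\<And>c X. T (\<lambda>i j. c * X i j) = (\<lambda>i j. c * T X i j)"
  shows "cdim {blockdiag n m X Y (T X) | X Y. X \<in> kerB n (gl n) p \<and> Y \<in> kerB m (gl m) q}
       = cdim (kerB n (gl n) p) + cdim (kerB m (gl m) q)"
proof -
  define L1 where "L1 X = blockdiag n m X 0 (T X)" for X
  define L2 where "L2 Y = blockdiag n m 0 Y 0" for Y
  have T0: "T 0 = 0" using Tadd[of 0 0] by simp
  have split: "blockdiag n m X Y (T X) = L1 X + L2 Y" for X Y
    by (auto simp: fun_eq_iff blockdiag_def L1_def L2_def)
  have seteq: "{blockdiag n m X Y (T X) | X Y. X \<in> kerB n (gl n) p \<and> Y \<in> kerB m (gl m) q}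
     = {L1 x + L2 y | x y. x \<in> kerB n (gl n) p \<and> y \<in> kerB m (gl m) q}"
    by (simp add: split)
  have lin1: "Vector_Spaces.linear (\<lambda>(c::complex) (X::cmat) i j. c * X i j) (\<lambda>(c::complex) (X::cmat) i j. c * X i j) L1"
    unfolding Vector_Spaces.linear_iff
  proof (intro conjI allI)
    show "vector_space (\<lambda>(c::complex) (X::cmat) i j. c * X i j)" by (rule V.vector_space_axioms)
    thus "vector_space (\<lambda>(c::complex) (X::cmat) i j. c * X i j)" .
    show "L1 (x + y) = L1 x + L1 y" for x y
      by (auto simp: fun_eq_iff blockdiag_def L1_def Tadd)
    show "L1 (\<lambda>i j. c * x i j) = (\<lambda>i j. c * L1 x i j)" for c x
      by (auto simp: fun_eq_iff blockdiag_def L1_def Tsc)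
  qed
  have lin2: "Vector_Spaces.linear (\<lambda>(c::complex) (X::cmat) i j. c * X i j) (\<lambda>(c::complex) (X::cmat) i j. c * X i j) L2"
    unfolding Vector_Spaces.linear_iff
  proof (intro conjI allI)
    show "vector_space (\<lambda>(c::complex) (X::cmat) i j. c * X i j)" by (rule V.vector_space_axioms)
    thus "vector_space (\<lambda>(c::complex) (X::cmat) i j. c * X i j)" .
    show "L2 (x + y) = L2 x + L2 y" for x y
      by (auto simp: fun_eq_iff blockdiag_def L2_def)
    show "L2 (\<lambda>i j. c * x i j) = (\<lambda>i j. c * L2 x i j)" for c x
      by (auto simp: fun_eq_iff blockdiag_def L2_def)
  qed
  have inj1: "inj_on L1 (gl n)"
  proof (rule inj_onI)
    fix X X' assume X: "X \<in> gl n" and X': "X' \<in> gl n" and e: "L1 X = L1 X'"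
    show "X = X'"
    proof (intro ext)
      fix i j
      show "X i j = X' i j"
      proof (cases "i \<in> {1..n} \<and> j \<in> {1..n}")
        case True
        have "L1 X i j = L1 X' i j" using e by simp
        thus ?thesis using True by (simp add: L1_def blockdiag_def)
      next
        case False thus ?thesis using X X' by (auto simp: gl_def)
      qed
    qed
  qed
  have inj2: "inj_on L2 (gl m)"
  proof (rule inj_onI)
    fix X X' assume X: "X \<in> gl m" and X': "X' \<in> gl m" and e: "L2 X = L2 X'"
    show "X = X'"
    proof (intro ext)
      fix i j
      show "X i j = X' i j"
      proof (cases "i \<in> {1..m} \<and> j \<in> {1..m}")
        case True
        have "L2 X (n+i) (n+j) = L2 X' (n+i) (n+j)" using e by simp
        thus ?thesis using True by (simp add: L2_def blockdiag_def)
      next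
        case False thus ?thesis using X X' by (auto simp: gl_def)
      qed
    qed
  qed
  have disj: "L1 x = 0" if x: "x \<in> gl n" and y: "y \<in> gl m" and s: "L1 x + L2 y = 0" for x y
  proof -
    have "x = 0"
    proof (intro ext)
      fix i j
      show "x i j = 0 i j"
      proof (cases "i \<in> {1..n} \<and> j \<in> {1..n}")
        case True
        have "(L1 x + L2 y) i j = 0" using s by simp
        thus ?thesis using True by (simp add: L1_def L2_def blockdiag_def)
      next
        case False thus ?thesis using x by (auto simp: gl_def)
      qed
    qed
    hence "L1 x = blockdiag n m 0 0 (T 0)" by (simp add: L1_def)
    thus ?thesis by (simp add: T0 blockdiag_def fun_eq_iff)
  qed
  show ?thesis
    unfolding seteq cdim_eq
    by (rule V.dim_direct[OF lin1 lin2 gl_subspace gl_subspace inj1 inj2 _ gl_span _ gl_span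
          kerB_gl_subspace kerB_sub_gl kerB_gl_subspace kerB_sub_gl disj]) auto
qed


theorem mainTheorem14:
  fixes n m :: nat and p q :: cmat
  assumes "n \<ge> 1"
  shows "(kerB (2*n+m) (seaweed n m) (Phi n m p q) =
           {blockdiag n m X Y X | X Y. X \<in> kerB n (gl n) p \<and> Y \<in> kerB m (gl m) q}) \<and>
         (kerB (2*n+m) (seaweed n m) (Phi_a n m p q) =
           {blockdiag n m X Y (revm n X) | X Y. X \<in> kerB n (gl n) p \<and> Y \<in> kerB m (gl m) q}) \<and>
         (cdim (kerB (2*n+m) (seaweed n m) (Phi n m p q)) =
           cdim (kerB n (gl n) p) + cdim (kerB m (gl m) q)) \<and>
         (cdim (kerB (2*n+m) (seaweed n m) (Phi_a n m p q)) =
           cdim (kerB n (gl n) p) + cdim (kerB m (gl m) q))"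
proof -
  interpret I1: swset n m p q "\<lambda>u. n+m+u" "\<lambda>a. a-n-m"
    by unfold_locales auto
  interpret I2: swset n m p q "\<lambda>u. 2*n+m+1-u" "\<lambda>a. 2*n+m+1-a"
    by unfold_locales auto
  have T1: "I1.Tr X = X" if X: "X \<in> gl n" for X
  proof (intro ext)
    fix i j
    show "I1.Tr X i j = X i j"
    proof (cases "i \<in> {1..n} \<and> j \<in> {1..n}")
      case True thus ?thesis unfolding swset.Tr_def[OF I1.swset_axioms] by simp
    next
      case False thus ?thesis using X unfolding swset.Tr_def[OF I1.swset_axioms] gl_def by auto
    qed
  qed
  have T2: "I2.Tr X = revm n X" for X
  proof (intro ext)
    fix i j
    show "I2.Tr X i j = revm n X i j"
    proof (cases "i \<in> {1..n} \<and> j \<in> {1..n}")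
      case True
      hence "2*n+m+1-(n+m+i) = n+1-i" "2*n+m+1-(n+m+j) = n+1-j" by auto
      thus ?thesis using True unfolding swset.Tr_def[OF I2.swset_axioms] revm_def by simp
    next
      case False thus ?thesis unfolding swset.Tr_def[OF I2.swset_axioms] revm_def by auto
    qed
  qed
  have k1: "kerB (2*n+m) (seaweed n m) (Phi n m p q) =
           {blockdiag n m X Y X | X Y. X \<in> kerB n (gl n) p \<and> Y \<in> kerB m (gl m) q}"
    unfolding Phi_G I1.ker_eq
  proof (intro set_eqI iffI)
    fix z assume "z \<in> {blockdiag n m X Y (I1.Tr X) | X Y. X \<in> kerB n (gl n) p \<and> Y \<in> kerB m (gl m) q}"
    then obtain X Y where z: "z = blockdiag n m X Y (I1.Tr X)" "X \<in> kerB n (gl n) p" "Y \<in> kerB m (gl m) q" by blast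
    have "I1.Tr X = X" using T1 kerB_sub_gl z(2) by blast
    thus "z \<in> {blockdiag n m X Y X | X Y. X \<in> kerB n (gl n) p \<and> Y \<in> kerB m (gl m) q}" using z by auto
  next
    fix z assume "z \<in> {blockdiag n m X Y X | X Y. X \<in> kerB n (gl n) p \<and> Y \<in> kerB m (gl m) q}"
    then obtain X Y where z: "z = blockdiag n m X Y X" "X \<in> kerB n (gl n) p" "Y \<in> kerB m (gl m) q" by blast
    have "I1.Tr X = X" using T1 kerB_sub_gl z(2) by blast
    hence "z = blockdiag n m X Y (I1.Tr X)" using z(1) by simp
    thus "z \<in> {blockdiag n m X Y (I1.Tr X) | X Y. X \<in> kerB n (gl n) p \<and> Y \<in> kerB m (gl m) q}" using z(2,3) by blast
  qed
  have k2: "kerB (2*n+m) (seaweed n m) (Phi_a n m p q) =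
           {blockdiag n m X Y (revm n X) | X Y. X \<in> kerB n (gl n) p \<and> Y \<in> kerB m (gl m) q}"
    unfolding Phi_a_G I2.ker_eq T2 ..
  have d1: "cdim {blockdiag n m X Y X | X Y. X \<in> kerB n (gl n) p \<and> Y \<in> kerB m (gl m) q} =
           cdim (kerB n (gl n) p) + cdim (kerB m (gl m) q)"
    using dim_final[of "\<lambda>X. X" n m p q] by simp
  have d2: "cdim {blockdiag n m X Y (revm n X) | X Y. X \<in> kerB n (gl n) p \<and> Y \<in> kerB m (gl m) q} =
           cdim (kerB n (gl n) p) + cdim (kerB m (gl m) q)"
  proof (rule dim_final)
    show "revm n (X + X') = revm n X + revm n X'" for X X' by (simp add: revm_def fun_eq_iff)
    show "revm n (\<lambda>i j. c * X i j) = (\<lambda>i j. c * revm n X i j)" for c X by (simp add: revm_def fun_eq_iff)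
  qed
  show ?thesis using k1 k2 d1 d2 by simp
qed

end
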